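(* Let $1\le p\le\infty$. Fix a positive integer $N$ (bound on the number of intervals) and a real $\lambda>0$ (lower bound on total length). Then persistent entropy is continuous on $(\mathcal{B}_F,d_p)$ restricted to such barcodes: for every $\varepsilon>0$ there exists $\delta>0$ such that for all $A,B\in\mathcal{B}_F$ with at most $N$ intervals each and with total lengths $L_a,L_b\ge\lambda$, $d_p(A,B)\le\delta$ implies $|E(A)-E(B)|\le\varepsilon$.
   Context: A persistence barcode is a finite multiset of intervals $[x,y]$, $x\le y$; $\mathcal{B}_F$ is the set of barcodes all of whose intervals have finite endpoints. For $A=\{[x_i^a,y_i^a]\}_{i=1}^{n_a}$, $\ell_i^a=y_i^a-x_i^a$, $L_a=\sum_i\ell_i^a$. $p$-th Wasserstein distance: pad the smaller barcode with zero-length intervals $[t,t]$ until both have $n_{\max}=\max\{n_a,n_b\}$ intervals; $d_p(A,B)=\big(\min_\gamma\sum_i\max\{|x_i^a-x^b_{\gamma(i)}|^p,|y_i^a-y^b_{\gamma(i)}|^p\}\big)^{1/p}$ for $p<\infty$ and $d_\infty(A,B)=\min_\gamma\max_i\max\{|x_i^a-x^b_{\gamma(i)}|,|y_i^a-y^b_{\gamma(i)}|\}$, minima over bijections $\gamma$ (and paddings). Persistent entropy: $E(A)=-\sum_i\frac{\ell_i^a}{L_a}\log\frac{\ell_i^a}{L_a}$ with $0\log0=0$. *)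

theory Defs
  imports "HOL-Analysis.Analysis" "HOL-Library.Multiset" "HOL-Library.Extended_Real"
begin

text \<open>An interval [x,y] is a pair (x,y) of reals; a barcode in B_F is a finite
  multiset of such pairs with x \<le> y.\<close>

type_synonym barcode = "(real \<times> real) multiset"

definition is_barcode :: "barcode \<Rightarrow> bool" where
  "is_barcode A \<longleftrightarrow> (\<forall>I\<in>#A. fst I \<le> snd I)"

definition int_length :: "real \<times> real \<Rightarrow> real" where
  "int_length I = snd I - fst I"

definition total_length :: "barcode \<Rightarrow> real" where
  "total_length A = (\<Sum>I\<in>#A. int_length I)"

definition pers_entropy :: "barcode \<Rightarrow> real" where
  "pers_entropy A = - (\<Sum>I\<in>#A. (let q = int_length I / total_length A in
                                   if q = 0 then 0 else q * ln q))"

definition paddings :: "barcode \<Rightarrow> nat \<Rightarrow> (real \<times> real) list set" where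
  "paddings A n = {xs. length xs = n \<and>
     (\<exists>ys zs. xs = ys @ zs \<and> mset ys = A \<and> (\<forall>z\<in>set zs. fst z = snd z))}"

definition match_cost :: "ereal \<Rightarrow> nat \<Rightarrow> (real \<times> real) list \<Rightarrow> (real \<times> real) list
                          \<Rightarrow> (nat \<Rightarrow> nat) \<Rightarrow> real" where
  "match_cost p n as bs \<gamma> =
     (if p = \<infinity> then
        (if n = 0 then 0 else
           Max ((\<lambda>i. max \<bar>fst (as!i) - fst (bs!\<gamma> i)\<bar> \<bar>snd (as!i) - snd (bs!\<gamma> i)\<bar>) ` {..<n}))
      else
        (\<Sum>i<n. max (\<bar>fst (as!i) - fst (bs!\<gamma> i)\<bar> powr real_of_ereal p)
                    (\<bar>snd (as!i) - snd (bs!\<gamma> i)\<bar> powr real_of_ereal p))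
          powr (1 / real_of_ereal p))"

definition wdist :: "ereal \<Rightarrow> barcode \<Rightarrow> barcode \<Rightarrow> real" where
  "wdist p A B =
     (let n = max (size A) (size B) in
      Inf {match_cost p n as bs \<gamma> | as bs \<gamma>.
             as \<in> paddings A n \<and> bs \<in> paddings B n \<and> \<gamma> permutes {..<n}})"

end

theory Submission
  imports Defs "HOL-Real_Asymp.Real_Asymp"
begin

definition hh :: "real \<Rightarrow> real" where
  "hh q = (if q = 0 then 0 else q * ln q)"

lemma lim0: "((\<lambda>x::real. x * ln x) \<longlongrightarrow> 0) (at_right 0)" by real_asymp

lemma hh_cont: "continuous_on {0..1::real} hh"
proof -
  have "continuous_on {0..1::real} (\<lambda>q. q * ln q)"
  proof (clarsimp simp: continuous_on_eq_continuous_within)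
    fix x :: real assume x: "0 \<le> x" "x \<le> 1"
    show "continuous (at x within {0..1}) (\<lambda>q. q * ln q)"
    proof (cases "x = 0")
      case True
      have "((\<lambda>q::real. q * ln q) \<longlongrightarrow> 0) (at 0 within {0..1})"
        using lim0 by (simp add: at_within_Icc_at_right)
      then show ?thesis using True by (simp add: continuous_within)
    next
      case False
      then have "continuous (at x) (\<lambda>q. q * ln q)" using x by (intro continuous_intros) auto
      then show ?thesis by (rule continuous_at_imp_continuous_at_within)
    qed
  qed
  moreover have "hh = (\<lambda>q. q * ln q)" by (rule ext) (simp add: hh_def)
  ultimately show ?thesis by (simp only:)
qed

lemma sum_list_zero_aux: "(\<forall>z\<in>set zs. (g::real\<times>real \<Rightarrow> real) z = 0) \<Longrightarrow> sum_list (map g zs) = 0"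
  by (induction zs) auto

lemma pad_sum:
  fixes g :: "real \<times> real \<Rightarrow> real"
  assumes "xs \<in> paddings A n" "\<And>t. g (t,t) = 0"
  shows "(\<Sum>I\<in>#A. g I) = (\<Sum>i<n. g (xs!i))"
proof -
  obtain ys zs where xs: "xs = ys @ zs" "mset ys = A" "\<forall>z\<in>set zs. fst z = snd z" "length xs = n"
    using assms(1) unfolding paddings_def by auto
  have "\<forall>z\<in>set zs. g z = 0" using xs(3) assms(2) by (metis prod.collapse)
  then have z0: "sum_list (map g zs) = 0" by (rule sum_list_zero_aux)
  have "(\<Sum>I\<in>#A. g I) = sum_list (map g ys)" using xs(2) by (metis mset_map sum_mset_sum_list)
  also have "\<dots> = sum_list (map g xs)" using z0 xs by simp
  also have "\<dots> = (\<Sum>i<n. g (xs!i))" using xs(4)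
    by (simp add: sum_list_sum_nth atLeast0LessThan)
  finally show ?thesis .
qed

lemma pad_wf:
  assumes "is_barcode A" "xs \<in> paddings A n" "i < n"
  shows "fst (xs!i) \<le> snd (xs!i)"
proof -
  obtain ys zs where xs: "xs = ys @ zs" "mset ys = A" "\<forall>z\<in>set zs. fst z = snd z" "length xs = n"
    using assms(2) unfolding paddings_def by auto
  have "xs!i \<in> set ys \<or> xs!i \<in> set zs" using assms(3) xs by (metis Un_iff nth_mem set_append)
  then show ?thesis using assms(1) xs unfolding is_barcode_def
    by (metis order_refl set_mset_mset)
qed

lemma pad_exists:
  assumes "size A \<le> n"
  shows "\<exists>xs. xs \<in> paddings A n"
proof -
  obtain ys where ys: "mset ys = A" using ex_mset by blast
  let ?xs = "ys @ replicate (n - size A) (0::real,0::real)"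
  have "length ys = size A" using ys by (metis size_mset)
  then have "?xs \<in> paddings A n" using assms ys unfolding paddings_def
    by (intro CollectI conjI exI[of _ ys] exI[of _ "replicate (n - size A) (0::real,0::real)"]) auto
  then show ?thesis by blast
qed

lemma cost_nonneg:
  assumes "1 \<le> p"
  shows "0 \<le> match_cost p n as bs \<gamma>"
proof (cases "p = \<infinity>")
  case True
  show ?thesis
  proof (cases "n = 0")
    case False
    let ?F = "(\<lambda>i. max \<bar>fst (as!i) - fst (bs!\<gamma> i)\<bar> \<bar>snd (as!i) - snd (bs!\<gamma> i)\<bar>)"
    have "?F 0 \<le> Max (?F ` {..<n})" using False by (intro Max_ge) auto
    moreover have "0 \<le> ?F 0" by simp
    ultimately have "0 \<le> Max (?F ` {..<n})" by linarith
    then show ?thesis using True False unfolding match_cost_def by simp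
  qed (simp add: match_cost_def True)
next
  case False
  then show ?thesis unfolding match_cost_def by simp
qed

lemma cost_bound:
  assumes "1 \<le> p" "i < n"
  shows "max \<bar>fst (as!i) - fst (bs!\<gamma> i)\<bar> \<bar>snd (as!i) - snd (bs!\<gamma> i)\<bar> \<le> match_cost p n as bs \<gamma>"
proof (cases "p = \<infinity>")
  case True
  let ?F = "(\<lambda>i. max \<bar>fst (as!i) - fst (bs!\<gamma> i)\<bar> \<bar>snd (as!i) - snd (bs!\<gamma> i)\<bar>)"
  have "?F i \<le> Max (?F ` {..<n})" using assms by (intro Max_ge) auto
  then show ?thesis using True assms unfolding match_cost_def by simp
next
  case False
  define r where "r = real_of_ereal p"
  have r1: "1 \<le> r" using assms(1) False unfolding r_def
    by (cases p) auto
  let ?a = "\<bar>fst (as!i) - fst (bs!\<gamma> i)\<bar>" and ?b = "\<bar>snd (as!i) - snd (bs!\<gamma> i)\<bar>"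
  let ?G = "\<lambda>j. max (\<bar>fst (as!j) - fst (bs!\<gamma> j)\<bar> powr r) (\<bar>snd (as!j) - snd (bs!\<gamma> j)\<bar> powr r)"
  define S where "S = (\<Sum>j<n. ?G j)"
  have GS: "?G i \<le> S" unfolding S_def using assms(2)
    by (intro member_le_sum) (auto simp: le_max_iff_disj)
  have mc: "match_cost p n as bs \<gamma> = S powr (1/r)"
    using False unfolding match_cost_def S_def r_def by simp
  have inv: "(x powr r) powr (1/r) = x" if "0 \<le> x" for x :: real
    using r1 that by (simp add: powr_powr powr_one)
  have "?a = (?a powr r) powr (1/r)" using inv by simp
  also have "\<dots> \<le> S powr (1/r)" using GS r1 by (intro powr_mono2) auto
  finally have A: "?a \<le> S powr (1/r)" .
  have "?b = (?b powr r) powr (1/r)" using inv by simp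
  also have "\<dots> \<le> S powr (1/r)" using GS r1 by (intro powr_mono2) auto
  finally have B: "?b \<le> S powr (1/r)" .
  show ?thesis using A B mc by simp
qed

lemma ent_formula:
  assumes "xs \<in> paddings A n"
  shows "total_length A = (\<Sum>i<n. int_length (xs!i))"
    and "pers_entropy A = - (\<Sum>i<n. hh (int_length (xs!i) / total_length A))"
proof -
  show "total_length A = (\<Sum>i<n. int_length (xs!i))"
    unfolding total_length_def by (rule pad_sum[OF assms]) (simp add: int_length_def)
  show "pers_entropy A = - (\<Sum>i<n. hh (int_length (xs!i) / total_length A))"
    unfolding pers_entropy_def
    by (subst pad_sum[OF assms]) (simp_all add: int_length_def hh_def Let_def)
qed

theorem proposition2:
  fixes p :: ereal and N :: nat and lam :: real
  assumes "1 \<le> p" and "0 < N" and "0 < lam"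
  shows "\<forall>\<epsilon>>0. \<exists>\<delta>>0. \<forall>A B.
           is_barcode A \<and> is_barcode B \<and> size A \<le> N \<and> size B \<le> N \<and>
           total_length A \<ge> lam \<and> total_length B \<ge> lam \<and> wdist p A B \<le> \<delta>
           \<longrightarrow> \<bar>pers_entropy A - pers_entropy B\<bar> \<le> \<epsilon>"
proof (intro allI impI)
  fix \<epsilon> :: real assume ep: "0 < \<epsilon>"
  have "uniformly_continuous_on {0..1::real} hh"
    by (rule compact_uniformly_continuous[OF hh_cont compact_Icc])
  moreover have "0 < \<epsilon> / N" using ep assms(2) by simp
  ultimately obtain d where d: "0 < d"
    "\<And>x y. x \<in> {0..1} \<Longrightarrow> y \<in> {0..1} \<Longrightarrow> dist y x < d \<Longrightarrow> dist (hh y) (hh x) < \<epsilon> / N"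
    unfolding uniformly_continuous_on_def by metis
  define \<delta> where "\<delta> = d * lam / (4 * (N + 1))"
  have dpos: "0 < \<delta>" using d(1) assms(3) unfolding \<delta>_def by simp
  show "\<exists>\<delta>>0. \<forall>A B.
           is_barcode A \<and> is_barcode B \<and> size A \<le> N \<and> size B \<le> N \<and>
           total_length A \<ge> lam \<and> total_length B \<ge> lam \<and> wdist p A B \<le> \<delta>
           \<longrightarrow> \<bar>pers_entropy A - pers_entropy B\<bar> \<le> \<epsilon>"
  proof (intro exI[of _ \<delta>] conjI allI impI dpos)
    fix A B assume H: "is_barcode A \<and> is_barcode B \<and> size A \<le> N \<and> size B \<le> N \<and>
           total_length A \<ge> lam \<and> total_length B \<ge> lam \<and> wdist p A B \<le> \<delta>"
    define n where "n = max (size A) (size B)"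
    have nN: "n \<le> N" using H unfolding n_def by simp
    define S where "S = {match_cost p n as bs \<gamma> | as bs \<gamma>.
             as \<in> paddings A n \<and> bs \<in> paddings B n \<and> \<gamma> permutes {..<n}}"
    have wS: "wdist p A B = Inf S" unfolding wdist_def S_def n_def Let_def by simp
    obtain as0 where "as0 \<in> paddings A n" using pad_exists[of A n] unfolding n_def by auto
    moreover obtain bs0 where "bs0 \<in> paddings B n" using pad_exists[of B n] unfolding n_def by auto
    ultimately have "match_cost p n as0 bs0 id \<in> S" unfolding S_def using permutes_id by blast
    then have Sne: "S \<noteq> {}" by blast
    have Sbdd: "bdd_below S" unfolding S_def bdd_below_def
      using cost_nonneg[OF assms(1)] by blast
    have "Inf S < 2 * \<delta>" using H wS dpos by linarith
    then obtain c where "c \<in> S" "c < 2 * \<delta>" using cInf_less_iff[OF Sne Sbdd] by blast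
    then obtain as bs \<gamma> where asp: "as \<in> paddings A n" and bsp: "bs \<in> paddings B n"
      and g: "\<gamma> permutes {..<n}" and cl: "match_cost p n as bs \<gamma> < 2 * \<delta>"
      unfolding S_def by blast
    have gi: "\<gamma> i < n" if "i < n" for i using g that by (metis lessThan_iff permutes_in_image)
    define l where "l i = int_length (as!i)" for i
    define l' where "l' i = int_length (bs!i)" for i
    define LA where "LA = total_length A"
    define LB where "LB = total_length B"
    have LAs: "LA = (\<Sum>i<n. l i)" unfolding LA_def l_def by (rule ent_formula(1)[OF asp])
    have LBs: "LB = (\<Sum>i<n. l' i)" unfolding LB_def l'_def by (rule ent_formula(1)[OF bsp])
    have LBg: "LB = (\<Sum>i<n. l' (\<gamma> i))" using LBs sum.permute[OF g, of l'] by simp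
    have LAl: "lam \<le> LA" "lam \<le> LB" using H unfolding LA_def LB_def by auto
    have lnn: "0 \<le> l i" if "i < n" for i
      using pad_wf[OF _ asp that] H unfolding l_def int_length_def by auto
    have lnn': "0 \<le> l' i" if "i < n" for i
      using pad_wf[OF _ bsp that] H unfolding l'_def int_length_def by auto
    have lle: "l i \<le> LA" if "i < n" for i
      unfolding LAs using that lnn by (intro member_le_sum) auto
    have lle': "l' i \<le> LB" if "i < n" for i
      unfolding LBs using that lnn' by (intro member_le_sum) auto
    have ldiff: "\<bar>l i - l' (\<gamma> i)\<bar> < 4 * \<delta>" if "i < n" for i
    proof -
      have "max \<bar>fst (as!i) - fst (bs!\<gamma> i)\<bar> \<bar>snd (as!i) - snd (bs!\<gamma> i)\<bar> < 2 * \<delta>"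
        using cost_bound[OF assms(1) that, of as bs \<gamma>] cl by linarith
      then show ?thesis unfolding l_def l'_def int_length_def by auto
    qed
    have Ldiff: "\<bar>LB - LA\<bar> \<le> N * (4 * \<delta>)"
    proof -
      have "\<bar>LB - LA\<bar> = \<bar>\<Sum>i<n. l' (\<gamma> i) - l i\<bar>" unfolding LBg LAs by (simp add: sum_subtractf)
      also have "\<dots> \<le> (\<Sum>i<n. \<bar>l' (\<gamma> i) - l i\<bar>)" by (rule sum_abs)
      also have "\<dots> \<le> (\<Sum>i<n. 4 * \<delta>)" using ldiff by (intro sum_mono) (force simp: abs_minus_commute less_imp_le)
      also have "\<dots> = n * (4 * \<delta>)" by simp
      also have "\<dots> \<le> N * (4 * \<delta>)" using nN dpos by (intro mult_right_mono) auto
      finally show ?thesis .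
    qed
    have qdist: "dist (l' (\<gamma> i) / LB) (l i / LA) < d" if i: "i < n" for i
    proof -
      have LApos: "0 < LA" "0 < LB" using LAl assms(3) by linarith+
      have id: "l i / LA - l' (\<gamma> i) / LB = (l i - l' (\<gamma> i)) / LA + (l' (\<gamma> i) / LB) * (LB - LA) / LA"
        using LApos by (simp add: field_simps)
      have e1: "\<bar>(l i - l' (\<gamma> i)) / LA\<bar> < 4 * \<delta> / lam"
      proof -
        have "\<bar>(l i - l' (\<gamma> i)) / LA\<bar> = \<bar>l i - l' (\<gamma> i)\<bar> / LA" using LApos by simp
        also have "\<dots> \<le> \<bar>l i - l' (\<gamma> i)\<bar> / lam" using LApos LAl assms(3)
          by (intro divide_left_mono) auto
        also have "\<dots> < 4 * \<delta> / lam" using ldiff[OF i] assms(3) by (simp add: divide_strict_right_mono)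
        finally show ?thesis .
      qed
      have e2: "\<bar>(l' (\<gamma> i) / LB) * (LB - LA) / LA\<bar> \<le> N * (4 * \<delta>) / lam"
      proof -
        have q1: "0 \<le> l' (\<gamma> i) / LB" "l' (\<gamma> i) / LB \<le> 1"
          using lnn'[OF gi[OF i]] lle'[OF gi[OF i]] LApos by auto
        have "\<bar>(l' (\<gamma> i) / LB) * (LB - LA) / LA\<bar> = (l' (\<gamma> i) / LB) * \<bar>LB - LA\<bar> / LA"
          using q1 LApos lnn'[OF gi[OF i]] by (simp add: abs_mult)
        also have "\<dots> \<le> 1 * \<bar>LB - LA\<bar> / LA" using q1 LApos
          by (intro divide_right_mono mult_right_mono) auto
        also have "\<dots> \<le> \<bar>LB - LA\<bar> / lam" using LApos LAl assms(3)
          by (simp add: divide_left_mono)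
        also have "\<dots> \<le> N * (4 * \<delta>) / lam" using Ldiff assms(3) by (simp add: divide_right_mono)
        finally show ?thesis .
      qed
      have N1: "(0::real) < real N + 1" by simp
      have k: "4 * \<delta> * (real N + 1) = d * lam" unfolding \<delta>_def using N1 by (simp add: field_simps)
      have "4 * \<delta> / lam + N * (4 * \<delta>) / lam = (4 * \<delta> * (real N + 1)) / lam"
        by (simp add: add_divide_distrib[symmetric] algebra_simps)
      also have "\<dots> = d" using k assms(3) by simp
      finally have "4 * \<delta> / lam + N * (4 * \<delta>) / lam = d" .
      then show ?thesis using id e1 e2 unfolding dist_real_def
        by (smt (verit) abs_minus_commute abs_triangle_ineq)
    qed
    have hd: "\<bar>hh (l i / LA) - hh (l' (\<gamma> i) / LB)\<bar> < \<epsilon> / N" if i: "i < n" for i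
    proof -
      have LApos: "0 < LA" "0 < LB" using LAl assms(3) by linarith+
      have "l i / LA \<in> {0..1}" using lnn[OF i] lle[OF i] LApos by auto
      moreover have "l' (\<gamma> i) / LB \<in> {0..1}" using lnn'[OF gi[OF i]] lle'[OF gi[OF i]] LApos by auto
      ultimately have "dist (hh (l' (\<gamma> i) / LB)) (hh (l i / LA)) < \<epsilon> / N"
        using d(2) qdist[OF i] by blast
      then show ?thesis unfolding dist_real_def by (simp add: abs_minus_commute)
    qed
    have EA: "pers_entropy A = - (\<Sum>i<n. hh (l i / LA))"
      unfolding l_def LA_def by (rule ent_formula(2)[OF asp])
    have EB: "pers_entropy B = - (\<Sum>i<n. hh (l' (\<gamma> i) / LB))"
    proof -
      have "pers_entropy B = - (\<Sum>i<n. hh (l' i / LB))"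
        unfolding l'_def LB_def by (rule ent_formula(2)[OF bsp])
      also have "(\<Sum>i<n. hh (l' i / LB)) = (\<Sum>i<n. hh (l' (\<gamma> i) / LB))"
        using sum.permute[OF g, of "\<lambda>i. hh (l' i / LB)"] by simp
      finally show ?thesis .
    qed
    have "\<bar>pers_entropy A - pers_entropy B\<bar> = \<bar>\<Sum>i<n. hh (l i / LA) - hh (l' (\<gamma> i) / LB)\<bar>"
      unfolding EA EB by (simp add: sum_subtractf abs_minus_commute)
    also have "\<dots> \<le> (\<Sum>i<n. \<bar>hh (l i / LA) - hh (l' (\<gamma> i) / LB)\<bar>)" by (rule sum_abs)
    also have "\<dots> \<le> (\<Sum>i<n. \<epsilon> / N)" using hd by (intro sum_mono) (simp add: less_imp_le)
    also have "\<dots> = n * (\<epsilon> / N)" by simp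
    also have "\<dots> \<le> N * (\<epsilon> / N)" using nN ep by (intro mult_right_mono) auto
    also have "\<dots> = \<epsilon>" using assms(2) by simp
    finally show "\<bar>pers_entropy A - pers_entropy B\<bar> \<le> \<epsilon>" .
  qed
qed

end
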